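(* Let $\mathbb{F}\in\{\mathbb{C},\mathbb{H},\mathbb{O}\}$ and let $H^2_{\mathbb{R}}\subset H^2_{\mathbb{F}}$ be a totally real totally geodesic plane. For any three points $w,z_1,z_2\in H^2_{\mathbb{R}}$ (with $z_i\ne w$), the half-spaces $\mathfrak{S}^+(z_1,w)$ and $\mathfrak{S}^+(z_2,w)$ are disjoint if and only if $\mathfrak{S}^+(z_1,w)\cap H^2_{\mathbb{R}}$ and $\mathfrak{S}^+(z_2,w)\cap H^2_{\mathbb{R}}$ are disjoint.
   Context: $H^2_{\mathbb{F}}$ is the $\mathbb{F}$-hyperbolic plane with distance $d$. For $z\neq w$, the equidistant half-space is $\mathfrak{S}^+(z,w)=\{y\in H^2_{\mathbb{F}}: d(y,z)<d(y,w)\}$. *)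

theory Defs
  imports Complex_Main
begin

section \<open>Quaternions and octonions via the Cayley--Dickson construction\<close>

type_synonym quat = "complex \<times> complex"
type_synonym oct = "quat \<times> quat"

definition qmult :: "quat \<Rightarrow> quat \<Rightarrow> quat" where
  "qmult x y = (case x of (a, b) \<Rightarrow> case y of (c, d) \<Rightarrow>
      (a * c - cnj d * b, d * a + b * cnj c))"
definition qconj :: "quat \<Rightarrow> quat" where
  "qconj x = (case x of (a, b) \<Rightarrow> (cnj a, - b))"
definition qadd :: "quat \<Rightarrow> quat \<Rightarrow> quat" where
  "qadd x y = (fst x + fst y, snd x + snd y)"
definition qneg :: "quat \<Rightarrow> quat" where
  "qneg x = (- fst x, - snd x)"

definition omult :: "oct \<Rightarrow> oct \<Rightarrow> oct" where
  "omult x y = (case x of (a, b) \<Rightarrow> case y of (c, d) \<Rightarrow>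
      (qadd (qmult a c) (qneg (qmult (qconj d) b)), qadd (qmult d a) (qmult b (qconj c))))"
definition oconj :: "oct \<Rightarrow> oct" where
  "oconj x = (case x of (a, b) \<Rightarrow> (qconj a, qneg b))"

definition ore :: "oct \<Rightarrow> real" where
  "ore x = Re (fst (fst x))"
definition onorm2 :: "oct \<Rightarrow> real" where
  "onorm2 x = (cmod (fst (fst x)))\<^sup>2 + (cmod (snd (fst x)))\<^sup>2
             + (cmod (fst (snd x)))\<^sup>2 + (cmod (snd (snd x)))\<^sup>2"
definition oreal :: "real \<Rightarrow> oct" where
  "oreal r = ((complex_of_real r, 0), (0, 0))"

datatype divalg = FC | FH | FO

definition inF :: "divalg \<Rightarrow> oct \<Rightarrow> bool" where
  "inF F x = (case F of
      FC \<Rightarrow> snd (fst x) = 0 \<and> snd x = (0, 0)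
    | FH \<Rightarrow> snd x = (0, 0)
    | FO \<Rightarrow> True)"

type_synonym pt = "oct \<times> oct"

definition pnorm2 :: "pt \<Rightarrow> real" where
  "pnorm2 z = onorm2 (fst z) + onorm2 (snd z)"

definition HF :: "divalg \<Rightarrow> pt set" where
  "HF F = {z. inF F (fst z) \<and> inF F (snd z) \<and> pnorm2 z < 1}"

text \<open>Homogeneous coordinates v = (z1, z2, 1) with the form of signature (2,1).
  The kernel K is the Lorentzian trace form of the Albert (Jordan) algebra model,
  K(v,w) = sum_{i,j} eps_i eps_j Re((v_i conj v_j)(w_j conj w_i)); in the associative
  cases F = C, H it equals |<v,w>|^2 for the Hermitian form <v,w>.\<close>
definition hcoord :: "pt \<Rightarrow> nat \<Rightarrow> oct" where
  "hcoord z i = (if i = 0 then fst z else if i = 1 then snd z else oreal 1)"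
definition heps :: "nat \<Rightarrow> real" where
  "heps i = (if i = 2 then -1 else 1)"
definition hkernel :: "pt \<Rightarrow> pt \<Rightarrow> real" where
  "hkernel z w = (\<Sum>i<3. \<Sum>j<3. heps i * heps j *
      ore (omult (omult (hcoord z i) (oconj (hcoord z j)))
                 (omult (hcoord w j) (oconj (hcoord w i)))))"

definition hdist :: "pt \<Rightarrow> pt \<Rightarrow> real" where
  "hdist z w = 2 * arcosh (sqrt (hkernel z w / ((1 - pnorm2 z) * (1 - pnorm2 w))))"

definition HR_std :: "divalg \<Rightarrow> pt set" where
  "HR_std F = {z \<in> HF F. \<exists>r s. z = (oreal r, oreal s)}"

definition isometry_HF :: "divalg \<Rightarrow> (pt \<Rightarrow> pt) \<Rightarrow> bool" where
  "isometry_HF F g = (bij_betw g (HF F) (HF F) \<and>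
      (\<forall>x\<in>HF F. \<forall>y\<in>HF F. hdist (g x) (g y) = hdist x y))"

definition totally_real_plane :: "divalg \<Rightarrow> pt set \<Rightarrow> bool" where
  "totally_real_plane F P = (\<exists>g. isometry_HF F g \<and> P = g ` HR_std F)"

definition halfspace :: "divalg \<Rightarrow> pt \<Rightarrow> pt \<Rightarrow> pt set" where
  "halfspace F z w = {y \<in> HF F. hdist y z < hdist y w}"

end

theory Submission
  imports Defs "HOL-Analysis.Analysis"
begin


lemma ore_mult_conj: "ore (omult x (oconj y)) = inner x y"
  by (cases x; cases y; auto simp: ore_def omult_def oconj_def qmult_def qconj_def qadd_def qneg_def
      inner_Pair inner_complex_def split: prod.split)

lemma oreal_scale: "oreal r = r *\<^sub>R oreal 1"
  by (simp add: oreal_def scaleR_conv_of_real)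

lemma omult_oreal: "omult x (oreal c) = c *\<^sub>R x"
  by (cases x; auto simp: oreal_def omult_def qmult_def qconj_def qadd_def qneg_def
      split: prod.split simp: scaleR_conv_of_real mult.commute)

lemma omult_oreal_oconj: "omult (oreal a) (oconj (oreal b)) = oreal (a*b)"
  by (auto simp: oreal_def omult_def oconj_def qmult_def qconj_def qadd_def qneg_def)

lemma ore_scale: "ore (c *\<^sub>R x) = c * ore x"
  by (simp add: ore_def)

lemma onorm2_eq: "onorm2 x = (norm x)^2"
  by (cases x; auto simp: onorm2_def norm_Pair)

lemma norm_e: "norm (oreal 1) = 1"
  by (simp add: oreal_def norm_Pair)

lemma inner_oreal: "inner x (oreal 1) = ore x"
  by (cases x; auto simp: oreal_def ore_def inner_Pair inner_complex_def)

definition Tk :: "pt \<Rightarrow> real \<Rightarrow> real \<Rightarrow> oct" where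
  "Tk y r s = r *\<^sub>R fst y + s *\<^sub>R snd y - oreal 1"

lemma hcoord_real: "hcoord (oreal r, oreal s) i = oreal (if i = 0 then r else if i = 1 then s else 1)"
  by (simp add: hcoord_def)

lemma sum3: "(\<Sum>i<(3::nat). f i) = f 0 + f 1 + (f 2 :: real)"
  by (simp add: numeral_3_eq_3 lessThan_Suc add.commute add.left_commute numeral_2_eq_2)

lemma hkernel_real: "hkernel y (oreal r, oreal s) = (norm (Tk y r s))^2"
proof -
  have "hkernel y (oreal r, oreal s) = (\<Sum>i<3. \<Sum>j<3. heps i * heps j *
      ((if j = 0 then r else if j = 1 then s else 1) * (if i = 0 then r else if i = 1 then s else 1)
       * inner (hcoord y i) (hcoord y j)))"
    unfolding hkernel_def hcoord_real omult_oreal_oconj omult_oreal ore_scale ore_mult_conj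
    by (simp add: mult.assoc)
  also have "\<dots> = (norm (Tk y r s))^2"
    unfolding sum3 power2_norm_eq_inner Tk_def
    by (simp add: hcoord_def heps_def inner_add_left inner_add_right inner_diff_left inner_diff_right
        inner_commute algebra_simps)
  finally show ?thesis .
qed


lemma lag2: fixes p1 p2 q1 q2 :: real
  shows "(p1*q2 - p2*q1)^2 \<le> (p1^2+p2^2)*(q1^2+q2^2)"
proof -
  have "(p1*q2 - p2*q1)^2 + (p1*q1+p2*q2)^2 = (p1^2+p2^2)*(q1^2+q2^2)"
    by (simp add: power2_eq_square algebra_simps)
  thus ?thesis by (smt (verit) zero_le_power2)
qed

lemma K2: fixes a1 a2 x1 x2 :: real
  assumes "a1^2+a2^2 \<le> 1" "x1^2+x2^2 \<le> 1"
  shows "(1-(x1^2+x2^2))*(1-(a1^2+a2^2)) \<le> (1-(a1*x1+a2*x2))^2"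
proof -
  have id: "(1-(a1*x1+a2*x2))^2 - (1-(x1^2+x2^2))*(1-(a1^2+a2^2))
     = ((a2-x2)^2+(a1-x1)^2) - (x2*(a1-x1) - x1*(a2-x2))^2"
    by (simp add: power2_eq_square algebra_simps)
  have "(x2*(a1-x1) - x1*(a2-x2))^2 \<le> (x2^2+x1^2)*((a2-x2)^2+(a1-x1)^2)"
    by (rule lag2[of x2 "a1-x1" x1 "a2-x2"])
  also have "\<dots> \<le> 1*((a2-x2)^2+(a1-x1)^2)"
    by (rule mult_right_mono) (use assms in auto)
  finally have h: "(x2*(a1-x1) - x1*(a2-x2))^2 \<le> (a2-x2)^2+(a1-x1)^2" by simp
  show ?thesis using id h by linarith
qed

lemma K1: fixes a1 a2 x1 x2 z1 z2 :: real
  assumes a: "a1^2+a2^2 \<le> 1" and x: "x1^2+x2^2 \<le> 1" and z: "z1^2+z2^2 \<le> 1"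
  shows "(1-(a1^2+a2^2))*((x1+z1)^2+(x2+z2)^2) \<le> 4*(1-(a1*x1+a2*x2))*(1+(a1*z1+a2*z2))"
proof -
  define n where "n = 1-(a1^2+a2^2)"
  define ax where "ax = 1-(a1*x1+a2*x2)"
  define az where "az = 1+(a1*z1+a2*z2)"
  define XX where "XX = 1-(x1^2+x2^2)"
  define ZZ where "ZZ = 1-(z1^2+z2^2)"
  define XZ where "XZ = 1+(x1*z1+x2*z2)"
  define D where "D = x1*(-z2) - x2*(-z1) - (a1*(-z2) - a2*(-z1)) + (a1*x2 - a2*x1)"
  have n0: "n \<ge> 0" using a by (simp add: n_def)
  have XX0: "XX \<ge> 0" using x by (simp add: XX_def)
  have ZZ0: "ZZ \<ge> 0" using z by (simp add: ZZ_def)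
  have id: "(ax^2 - n*XX)*(az^2 - n*ZZ) - (n*XZ - ax*az)^2 = n*D^2"
    unfolding n_def ax_def az_def XX_def ZZ_def XZ_def D_def
    by (simp add: power2_eq_square algebra_simps)
  have k2x: "n*XX \<le> ax^2" using K2[OF a x] by (simp add: n_def XX_def ax_def mult.commute)
  have e1: "1 - (a1*(-z1)+a2*(-z2)) = az" by (simp add: az_def)
  have k2z: "n*ZZ \<le> az^2" using K2[OF a, of "-z1" "-z2"] z unfolding e1 by (simp add: n_def ZZ_def mult.commute)
  have "(n*XZ - ax*az)^2 \<le> (ax^2 - n*XX)*(az^2 - n*ZZ)"
    using id n0 by (smt (verit) mult_nonneg_nonneg zero_le_power2)
  also have "\<dots> \<le> ax^2 * az^2"
    apply (rule mult_mono) using k2x k2z n0 XX0 ZZ0 by (auto simp: mult_nonneg_nonneg)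
  finally have sq: "(n*XZ - ax*az)^2 \<le> (ax*az)^2" by (simp add: power_mult_distrib)
  have "\<bar>a1*x1+a2*x2\<bar> \<le> 1"
  proof -
    have "(a1*x1+a2*x2)^2 + (a1*x2-a2*x1)^2 = (a1^2+a2^2)*(x1^2+x2^2)"
      by (simp add: power2_eq_square algebra_simps)
    hence "(a1*x1+a2*x2)^2 \<le> (a1^2+a2^2)*(x1^2+x2^2)"
      by (smt (verit) zero_le_power2)
    also have "\<dots> \<le> 1*1" by (rule mult_mono) (use a x in auto)
    finally show ?thesis by (simp add: abs_square_le_1)
  qed
  hence ax0: "ax \<ge> 0" by (simp add: ax_def)
  have "\<bar>a1*z1+a2*z2\<bar> \<le> 1"
  proof -
    have "(a1*z1+a2*z2)^2 + (a1*z2-a2*z1)^2 = (a1^2+a2^2)*(z1^2+z2^2)"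
      by (simp add: power2_eq_square algebra_simps)
    hence "(a1*z1+a2*z2)^2 \<le> (a1^2+a2^2)*(z1^2+z2^2)"
      by (smt (verit) zero_le_power2)
    also have "\<dots> \<le> 1*1" by (rule mult_mono) (use a z in auto)
    finally show ?thesis by (simp add: abs_square_le_1)
  qed
  hence az0: "az \<ge> 0" by (simp add: az_def)
  have "\<bar>n*XZ - ax*az\<bar> \<le> \<bar>ax*az\<bar>" using sq by (simp add: abs_le_square_iff)
  hence nxz: "n*XZ \<le> 2*(ax*az)" using ax0 az0 by (simp add: abs_le_iff)
  have "(x1+z1)^2+(x2+z2)^2 \<le> 2*XZ"
    using x z by (simp add: XZ_def power2_eq_square algebra_simps)
  hence "n*((x1+z1)^2+(x2+z2)^2) \<le> n*(2*XZ)" by (rule mult_left_mono) (rule n0)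
  also have "\<dots> = 2*(n*XZ)" by (simp add: algebra_simps)
  also have "\<dots> \<le> 4*(ax*az)" using nxz by linarith
  finally have "n*((x1+z1)^2+(x2+z2)^2) \<le> 4*(ax*az)" .
  thus ?thesis by (simp only: n_def ax_def az_def mult.assoc)
qed


lemma cs2: fixes u1 u2 b1 b2 :: real
  shows "(u1*b1+u2*b2)^2 \<le> (u1^2+u2^2)*(b1^2+b2^2)"
proof -
  have "(u1*b1+u2*b2)^2 + (u1*b2-u2*b1)^2 = (u1^2+u2^2)*(b1^2+b2^2)"
    by (simp add: power2_eq_square algebra_simps)
  thus ?thesis by (smt (verit) zero_le_power2)
qed

lemma norm_comb2: fixes y1 y2 :: "'a::real_normed_vector"
  shows "(norm (v1 *\<^sub>R y1 + v2 *\<^sub>R y2))^2 \<le> (v1^2+v2^2)*((norm y1)^2+(norm y2)^2)"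
proof -
  have "norm (v1 *\<^sub>R y1 + v2 *\<^sub>R y2) \<le> \<bar>v1\<bar>*norm y1 + \<bar>v2\<bar>*norm y2"
    by (metis norm_scaleR norm_triangle_ineq order_trans order_refl)
  hence "(norm (v1 *\<^sub>R y1 + v2 *\<^sub>R y2))^2 \<le> (\<bar>v1\<bar>*norm y1 + \<bar>v2\<bar>*norm y2)^2"
    by (simp add: power_mono)
  also have "\<dots> \<le> (\<bar>v1\<bar>^2+\<bar>v2\<bar>^2)*((norm y1)^2+(norm y2)^2)" by (rule cs2)
  finally show ?thesis by simp
qed

lemma core:
  fixes y1 y2 e :: "'a::real_inner" and x1 x2 :: real
  assumes e: "norm e = 1" and y: "(norm y1)^2 + (norm y2)^2 < 1" and x: "x1^2+x2^2 < 1"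
  shows "(inner (x1 *\<^sub>R y1 + x2 *\<^sub>R y2 - e) y1)^2 + (inner (x1 *\<^sub>R y1 + x2 *\<^sub>R y2 - e) y2)^2
         < (inner (x1 *\<^sub>R y1 + x2 *\<^sub>R y2 - e) e)^2"
proof -
  define T where "T = x1 *\<^sub>R y1 + x2 *\<^sub>R y2 - e"
  define a1 where "a1 = inner y1 e"
  define a2 where "a2 = inner y2 e"
  define y1' where "y1' = y1 - a1 *\<^sub>R e"
  define y2' where "y2' = y2 - a2 *\<^sub>R e"
  have ee: "inner e e = 1" using e by (simp add: power2_norm_eq_inner[symmetric])
  have o1: "inner y1' e = 0" by (simp add: y1'_def a1_def inner_diff_left ee)
  have o2: "inner y2' e = 0" by (simp add: y2'_def a2_def inner_diff_left ee)
  have n1: "(norm y1)^2 = (norm y1')^2 + a1^2"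
    unfolding power2_norm_eq_inner y1'_def
    by (simp add: inner_diff_left inner_diff_right ee a1_def inner_commute power2_eq_square)
  have n2: "(norm y2)^2 = (norm y2')^2 + a2^2"
    unfolding power2_norm_eq_inner y2'_def
    by (simp add: inner_diff_left inner_diff_right ee a2_def inner_commute power2_eq_square)
  define \<sigma> where "\<sigma> = (norm y1')^2 + (norm y2')^2"
  have sig: "\<sigma> + (a1^2+a2^2) < 1" using y n1 n2 by (simp add: \<sigma>_def)
  have sig0: "\<sigma> \<ge> 0" by (simp add: \<sigma>_def)
  have a: "a1^2+a2^2 < 1" using sig sig0 by linarith
  have xa: "\<bar>x1*a1+x2*a2\<bar> < 1"
  proof -
    have "(x1*a1+x2*a2)^2 \<le> (x1^2+x2^2)*(a1^2+a2^2)" by (rule cs2)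
    also have "\<dots> < 1" using x a
      by (smt (verit) mult_le_one mult_nonneg_nonneg zero_le_power2 mult_strict_mono)
    finally show ?thesis by (simp add: abs_square_less_1)
  qed
  define \<alpha> where "\<alpha> = inner T y1"
  define \<beta> where "\<beta> = inner T y2"
  define \<gamma> where "\<gamma> = inner T e"
  have gam: "\<gamma> = x1*a1+x2*a2 - 1"
    by (simp add: \<gamma>_def T_def inner_add_left inner_diff_left ee a1_def a2_def)
  have gneg: "\<gamma> < 0" using gam xa by linarith
  show ?thesis
  proof (cases "\<alpha>^2+\<beta>^2 = 0")
    case True
    thus ?thesis using gneg by (simp add: \<alpha>_def \<beta>_def \<gamma>_def T_def)
  next
    case False
    define m where "m = sqrt (\<alpha>^2+\<beta>^2)"
    have ab0: "\<alpha>^2+\<beta>^2 > 0" using False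
      by (metis add_nonneg_nonneg zero_le_power2 order_less_le)
    have m0: "m > 0" using ab0 by (simp add: m_def)
    have mm: "m^2 = \<alpha>^2+\<beta>^2" by (simp add: m_def add_nonneg_nonneg)
    define z1 where "z1 = \<alpha>/m"
    define z2 where "z2 = \<beta>/m"
    have "z1^2+z2^2 = (\<alpha>^2+\<beta>^2)/m^2"
      by (simp add: z1_def z2_def power_divide add_divide_distrib)
    also have "\<dots> = m^2/m^2" by (simp only: mm)
    also have "\<dots> = 1" using m0 by simp
    finally have z: "z1^2+z2^2 = 1" .
    define Q where "Q = z1 *\<^sub>R y1 + z2 *\<^sub>R y2"
    have mQ: "inner T Q = m"
    proof -
      have "inner T Q = z1*\<alpha> + z2*\<beta>" by (simp add: Q_def inner_add_right \<alpha>_def \<beta>_def)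
      also have "\<dots> = (\<alpha>^2+\<beta>^2)/m" by (simp add: z1_def z2_def power2_eq_square add_divide_distrib)
      also have "\<dots> = m^2/m" by (simp only: mm)
      also have "\<dots> = m" using m0 by (simp add: power2_eq_square)
      finally show ?thesis .
    qed
    define p0 where "p0 = x1*a1+x2*a2"
    define q0 where "q0 = z1*a1+z2*a2"
    define P' where "P' = x1 *\<^sub>R y1' + x2 *\<^sub>R y2'"
    define Q' where "Q' = z1 *\<^sub>R y1' + z2 *\<^sub>R y2'"
    have TP: "T = P' + (p0 - 1) *\<^sub>R e"
      by (simp add: T_def P'_def p0_def y1'_def y2'_def algebra_simps)
    have QQ: "Q + e = Q' + (q0 + 1) *\<^sub>R e"
      by (simp add: Q_def Q'_def q0_def y1'_def y2'_def algebra_simps)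
    have oP: "inner P' e = 0" by (simp add: P'_def inner_add_left o1 o2)
    have oQ: "inner Q' e = 0" by (simp add: Q'_def inner_add_left o1 o2)
    have key: "inner T (Q + e) = inner P' Q' + (p0 - 1)*(q0 + 1)"
      unfolding TP QQ
      by (simp add: inner_add_left inner_add_right oP oQ inner_commute[of e P'] inner_commute[of e Q'] ee)
    have "4 * inner P' Q' = (norm (P'+Q'))^2 - (norm (P'-Q'))^2"
      unfolding power2_norm_eq_inner
      by (simp add: inner_add_left inner_add_right inner_diff_left inner_diff_right inner_commute)
    hence "4 * inner P' Q' \<le> (norm (P'+Q'))^2" by simp
    also have "P' + Q' = (x1+z1) *\<^sub>R y1' + (x2+z2) *\<^sub>R y2'"
      by (simp add: P'_def Q'_def algebra_simps)
    also have "(norm \<dots>)^2 \<le> ((x1+z1)^2+(x2+z2)^2) * \<sigma>"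
      unfolding \<sigma>_def by (rule norm_comb2)
    finally have ip: "4 * inner P' Q' \<le> ((x1+z1)^2+(x2+z2)^2) * \<sigma>" .
    have k1: "(1-(a1^2+a2^2))*((x1+z1)^2+(x2+z2)^2) \<le> 4*(1-p0)*(1+q0)"
      unfolding p0_def q0_def mult.commute[of x1] mult.commute[of x2] mult.commute[of z1] mult.commute[of z2]
      by (rule K1[of a1 a2 x1 x2 z1 z2]) (use a x z in auto)
    have p0l: "1 - p0 > 0" using xa by (simp add: p0_def)
    have q0l: "1 + q0 > 0"
    proof -
      have "(z1*a1+z2*a2)^2 \<le> (z1^2+z2^2)*(a1^2+a2^2)" by (rule cs2)
      also have "\<dots> < 1" using z a by simp
      finally have "\<bar>q0\<bar> < 1" by (simp add: abs_square_less_1 q0_def)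
      thus ?thesis by linarith
    qed
    have "4 * inner P' Q' < 4*(1-p0)*(1+q0)"
    proof (cases "(x1+z1)^2+(x2+z2)^2 = 0")
      case True
      have "0 < 4*(1-p0)*(1+q0)" using p0l q0l by simp
      thus ?thesis using ip True by simp
    next
      case False
      hence vpos: "(x1+z1)^2+(x2+z2)^2 > 0" by (simp add: add_nonneg_nonneg order_less_le)
      have "((x1+z1)^2+(x2+z2)^2) * \<sigma> < ((x1+z1)^2+(x2+z2)^2) * (1-(a1^2+a2^2))"
        using vpos sig by simp
      thus ?thesis using ip k1 by (simp add: mult.commute)
    qed
    hence "inner T (Q + e) < 0" using key by (simp add: algebra_simps)
    hence "m + \<gamma> < 0" using mQ by (simp add: inner_add_right \<gamma>_def)
    hence "m < -\<gamma>" by linarith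
    hence "m^2 < (-\<gamma>)^2" using m0 by (intro power_strict_mono) auto
    hence "m^2 < \<gamma>^2" by simp
    thus ?thesis using mm by (simp add: \<alpha>_def \<beta>_def \<gamma>_def T_def)
  qed
qed


lemma norm_oreal: "norm (oreal t) = \<bar>t\<bar>"
  by (simp add: oreal_def norm_Pair)

lemma pnorm2_eq: "pnorm2 y = (norm (fst y))^2 + (norm (snd y))^2"
  by (simp add: pnorm2_def onorm2_eq)

lemma pnorm2_real: "pnorm2 (oreal r, oreal s) = r^2 + s^2"
  by (simp add: pnorm2_eq norm_oreal)

lemma inF_oreal: "inF F (oreal t)"
  by (cases F) (simp_all add: inF_def oreal_def)

lemma HR_std_iff: "z \<in> HR_std F \<longleftrightarrow> (\<exists>r s. z = (oreal r, oreal s) \<and> r^2+s^2 < 1)"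
  by (fastforce simp: HR_std_def HF_def inF_oreal pnorm2_real)

lemma HR_std_sub: "HR_std F \<subseteq> HF F"
  by (auto simp: HR_std_def)

lemma inner_e_e: "inner (oreal 1) (oreal 1) = 1"
  using norm_e by (simp add: power2_norm_eq_inner[symmetric])

lemma Kge:
  assumes y: "pnorm2 y < 1" and x: "r^2+s^2 < 1"
  shows "(1 - pnorm2 y) * (1 - (r^2+s^2)) \<le> (norm (Tk y r s))^2"
proof -
  define e where "e = oreal 1"
  define a1 where "a1 = inner (fst y) e"
  define a2 where "a2 = inner (snd y) e"
  have ne: "norm e = 1" by (simp add: e_def norm_e)
  have "\<bar>a1\<bar> \<le> norm (fst y)" using Cauchy_Schwarz_ineq2[of "fst y" e] ne by (simp add: a1_def)
  hence a1s: "a1^2 \<le> (norm (fst y))^2" by (simp add: abs_le_square_iff[symmetric])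
  have "\<bar>a2\<bar> \<le> norm (snd y)" using Cauchy_Schwarz_ineq2[of "snd y" e] ne by (simp add: a2_def)
  hence a2s: "a2^2 \<le> (norm (snd y))^2" by (simp add: abs_le_square_iff[symmetric])
  have asum: "a1^2+a2^2 \<le> pnorm2 y" using a1s a2s by (simp add: pnorm2_eq)
  have Te: "inner (Tk y r s) e = r * a1 + s * a2 - 1"
    using inner_e_e by (simp add: Tk_def e_def a1_def a2_def inner_add_left inner_diff_left)
  have "\<bar>inner (Tk y r s) e\<bar> \<le> norm (Tk y r s)" using Cauchy_Schwarz_ineq2[of "Tk y r s" e] ne by simp
  hence T2: "(inner (Tk y r s) e)^2 \<le> (norm (Tk y r s))^2" by (simp add: abs_le_square_iff[symmetric])
  have "(1-(r^2+s^2))*(1-(a1^2+a2^2)) \<le> (1-(a1 * r+a2 * s))^2"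
    by (rule K2) (use asum y x in auto)
  moreover have "(1 - (r^2+s^2)) * (1 - pnorm2 y) \<le> (1-(r^2+s^2))*(1-(a1^2+a2^2))"
    by (rule mult_left_mono) (use asum x in auto)
  moreover have "(1-(a1 * r+a2 * s))^2 = (inner (Tk y r s) e)^2"
    unfolding Te by (simp add: power2_eq_square algebra_simps)
  ultimately show ?thesis using T2 by (simp add: mult.commute)
qed

lemma hdist_less_iff:
  assumes y: "pnorm2 y < 1" and z: "r^2+s^2 < 1" and w: "r'^2+s'^2 < 1"
  shows "hdist y (oreal r, oreal s) < hdist y (oreal r', oreal s') \<longleftrightarrow>
    (norm (Tk y r s))^2 / (1 - (r^2+s^2)) < (norm (Tk y r' s'))^2 / (1 - (r'^2+s'^2))"
proof -
  define c where "c = 1 - pnorm2 y"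
  have c0: "c > 0" using y by (simp add: c_def)
  define qz where "qz = (norm (Tk y r s))^2 / (1 - (r^2+s^2))"
  define qw where "qw = (norm (Tk y r' s'))^2 / (1 - (r'^2+s'^2))"
  have hz: "hdist y (oreal r, oreal s) = 2 * arcosh (sqrt (qz / c))"
    by (simp add: hdist_def hkernel_real pnorm2_real qz_def c_def divide_divide_eq_left mult.commute)
  have hw: "hdist y (oreal r', oreal s') = 2 * arcosh (sqrt (qw / c))"
    by (simp add: hdist_def hkernel_real pnorm2_real qw_def c_def divide_divide_eq_left mult.commute)
  have qz1: "qz / c \<ge> 1"
  proof -
    have p: "c * (1 - (r^2+s^2)) > 0" using c0 z by simp
    have "c * (1 - (r^2+s^2)) \<le> (norm (Tk y r s))^2"
      using Kge[OF y z] by (simp add: c_def)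
    hence "1 \<le> (norm (Tk y r s))^2 / (c * (1 - (r^2+s^2)))"
      using p by (simp add: le_divide_eq)
    thus ?thesis by (simp add: qz_def divide_divide_eq_left mult.commute)
  qed
  have qw1: "qw / c \<ge> 1"
  proof -
    have p: "c * (1 - (r'^2+s'^2)) > 0" using c0 w by simp
    have "c * (1 - (r'^2+s'^2)) \<le> (norm (Tk y r' s'))^2"
      using Kge[OF y w] by (simp add: c_def)
    hence "1 \<le> (norm (Tk y r' s'))^2 / (c * (1 - (r'^2+s'^2)))"
      using p by (simp add: le_divide_eq)
    thus ?thesis by (simp add: qw_def divide_divide_eq_left mult.commute)
  qed
  have "hdist y (oreal r, oreal s) < hdist y (oreal r', oreal s') \<longleftrightarrow> sqrt (qz/c) < sqrt (qw/c)"
    unfolding hz hw using qz1 qw1 by (simp add: arcosh_less_iff_real)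
  also have "\<dots> \<longleftrightarrow> qz / c < qw / c" by simp
  also have "\<dots> \<longleftrightarrow> qz < qw" using c0 by (simp add: divide_less_cancel)
  finally show ?thesis by (simp add: qz_def qw_def)
qed

lemma Tk_real: "Tk (oreal u, oreal v) r s = oreal (r * u + s * v - 1)"
  unfolding Tk_def oreal_scale[of u] oreal_scale[of v] oreal_scale[of "r * u + s * v - 1"]
  by (simp add: algebra_simps)

lemma real_case:
  assumes y: "pnorm2 y < 1" and w0: "r0^2+s0^2 < 1"
  shows "\<exists>u v. u^2+v^2 < 1 \<and> (\<forall>r s. r^2+s^2 < 1 \<longrightarrow>
     hdist y (oreal r, oreal s) < hdist y (oreal r0, oreal s0) \<longrightarrow>
     hdist (oreal u, oreal v) (oreal r, oreal s) < hdist (oreal u, oreal v) (oreal r0, oreal s0))"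
proof -
  define e where "e = oreal 1"
  define T where "T = Tk y r0 s0"
  define \<alpha> where "\<alpha> = inner T (fst y)"
  define \<beta> where "\<beta> = inner T (snd y)"
  define \<gamma> where "\<gamma> = inner T e"
  have ne: "norm e = 1" by (simp add: e_def norm_e)
  have ab: "\<alpha>^2 + \<beta>^2 < \<gamma>^2"
    using core[OF ne _ w0, of "fst y" "snd y"] y
    by (simp add: pnorm2_eq \<alpha>_def \<beta>_def \<gamma>_def T_def Tk_def e_def)
  have g0: "\<gamma> \<noteq> 0" using ab by (metis add_nonneg_nonneg not_less power_zero_numeral zero_le_power2)
  have g2: "\<gamma>^2 > 0" using g0 by simp
  define u where "u = \<alpha>/\<gamma>"
  define v where "v = \<beta>/\<gamma>"
  have uv: "u^2+v^2 < 1"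
  proof -
    have "u^2+v^2 = (\<alpha>^2+\<beta>^2)/\<gamma>^2" by (simp add: u_def v_def power_divide add_divide_distrib)
    also have "\<dots> < 1" using ab g2 by simp
    finally show ?thesis .
  qed
  have T0: "T \<noteq> 0" using g0 by (auto simp: \<gamma>_def)
  have nT: "(norm T)^2 > 0" using T0 by simp
  have Kp: "(norm (Tk (oreal u, oreal v) r s))^2 = (inner T (Tk y r s))^2 / \<gamma>^2" for r s
  proof -
    have "inner T (Tk y r s) = r * \<alpha> + s * \<beta> - \<gamma>"
      by (simp add: Tk_def inner_add_right inner_diff_right \<alpha>_def \<beta>_def \<gamma>_def e_def)
    also have "\<dots> = \<gamma> * (r * u + s * v - 1)" using g0 by (simp add: u_def v_def algebra_simps)
    finally have "inner T (Tk y r s) = \<gamma> * (r * u + s * v - 1)" .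
    hence "(inner T (Tk y r s))^2 / \<gamma>^2 = (r * u + s * v - 1)^2"
      using g2 by (simp add: power_mult_distrib)
    thus ?thesis by (simp add: Tk_real norm_oreal)
  qed
  have "\<forall>r s. r^2+s^2 < 1 \<longrightarrow>
     hdist y (oreal r, oreal s) < hdist y (oreal r0, oreal s0) \<longrightarrow>
     hdist (oreal u, oreal v) (oreal r, oreal s) < hdist (oreal u, oreal v) (oreal r0, oreal s0)"
  proof (intro allI impI)
    fix r s assume z: "r^2+s^2 < (1::real)"
    assume "hdist y (oreal r, oreal s) < hdist y (oreal r0, oreal s0)"
    hence hyp: "(norm (Tk y r s))^2 / (1 - (r^2+s^2)) < (norm T)^2 / (1 - (r0^2+s0^2))"
      using hdist_less_iff[OF y z w0] by (simp add: T_def)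
    define dz where "dz = 1 - (r^2+s^2)"
    define dw where "dw = 1 - (r0^2+s0^2)"
    have dz0: "dz > 0" using z by (simp add: dz_def)
    have dw0: "dw > 0" using w0 by (simp add: dw_def)
    have cs: "(inner T (Tk y r s))^2 \<le> (norm T)^2 * (norm (Tk y r s))^2"
    proof -
      have "\<bar>inner T (Tk y r s)\<bar> \<le> norm T * norm (Tk y r s)" by (rule Cauchy_Schwarz_ineq2)
      hence "\<bar>inner T (Tk y r s)\<bar>^2 \<le> (norm T * norm (Tk y r s))^2"
        by (intro power_mono) auto
      thus ?thesis by (simp add: power_mult_distrib)
    qed
    have TT: "inner T (Tk y r0 s0) = (norm T)^2" by (simp add: T_def power2_norm_eq_inner)
    have "(inner T (Tk y r s))^2 / dz \<le> (norm T)^2 * ((norm (Tk y r s))^2 / dz)"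
      using cs dz0 by (simp add: divide_right_mono)
    also have "\<dots> < (norm T)^2 * ((norm T)^2 / dw)"
      using mult_strict_left_mono[OF hyp nT] by (simp only: dz_def dw_def)
    also have "\<dots> = (inner T (Tk y r0 s0))^2 / dw" by (simp add: TT power2_eq_square)
    finally have main: "(inner T (Tk y r s))^2 / dz < (inner T (Tk y r0 s0))^2 / dw" .
    have "(norm (Tk (oreal u, oreal v) r s))^2 / dz < (norm (Tk (oreal u, oreal v) r0 s0))^2 / dw"
      unfolding Kp using divide_strict_right_mono[OF main g2] by (simp add: divide_divide_eq_left mult.commute)
    thus "hdist (oreal u, oreal v) (oreal r, oreal s) < hdist (oreal u, oreal v) (oreal r0, oreal s0)"
      using hdist_less_iff[of "(oreal u, oreal v)" r s r0 s0] uv z w0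
      by (simp add: pnorm2_real dz_def dw_def)
  qed
  thus ?thesis using uv by blast
qed



theorem theorem2p4:
  fixes F :: divalg and P :: "pt set" and w z1 z2 :: pt
  assumes "totally_real_plane F P"
    and "w \<in> P" and "z1 \<in> P" and "z2 \<in> P"
    and "z1 \<noteq> w" and "z2 \<noteq> w"
  shows "halfspace F z1 w \<inter> halfspace F z2 w = {} \<longleftrightarrow>
         (halfspace F z1 w \<inter> P) \<inter> (halfspace F z2 w \<inter> P) = {}"
proof
  assume "halfspace F z1 w \<inter> halfspace F z2 w = {}"
  thus "(halfspace F z1 w \<inter> P) \<inter> (halfspace F z2 w \<inter> P) = {}" by blast
next
  assume R: "(halfspace F z1 w \<inter> P) \<inter> (halfspace F z2 w \<inter> P) = {}"
  obtain g where iso: "isometry_HF F g" and Pg: "P = g ` HR_std F"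
    using assms(1) by (auto simp: totally_real_plane_def)
  have bij: "bij_betw g (HF F) (HF F)" and gd: "\<And>x y. x \<in> HF F \<Longrightarrow> y \<in> HF F \<Longrightarrow> hdist (g x) (g y) = hdist x y"
    using iso by (auto simp: isometry_HF_def)
  have gimg: "g ` HF F = HF F" using bij by (simp add: bij_betw_def)
  obtain w0 where w0: "w0 \<in> HR_std F" and ww: "w = g w0" using assms(2) Pg by blast
  obtain a1 where a1: "a1 \<in> HR_std F" and za1: "z1 = g a1" using assms(3) Pg by blast
  obtain a2 where a2: "a2 \<in> HR_std F" and za2: "z2 = g a2" using assms(4) Pg by blast
  obtain r0 s0 where w0e: "w0 = (oreal r0, oreal s0)" and w0n: "r0^2+s0^2 < 1"
    using w0 by (auto simp: HR_std_iff)
  obtain r1 s1 where a1e: "a1 = (oreal r1, oreal s1)" and a1n: "r1^2+s1^2 < 1"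
    using a1 by (auto simp: HR_std_iff)
  obtain r2 s2 where a2e: "a2 = (oreal r2, oreal s2)" and a2n: "r2^2+s2^2 < 1"
    using a2 by (auto simp: HR_std_iff)
  have w0H: "w0 \<in> HF F" and a1H: "a1 \<in> HF F" and a2H: "a2 \<in> HF F"
    using w0 a1 a2 HR_std_sub by auto
  show "halfspace F z1 w \<inter> halfspace F z2 w = {}"
  proof (rule ccontr)
    assume "halfspace F z1 w \<inter> halfspace F z2 w \<noteq> {}"
    then obtain y where y1: "y \<in> halfspace F z1 w" and y2: "y \<in> halfspace F z2 w" by blast
    have yH: "y \<in> HF F" using y1 by (simp add: halfspace_def)
    obtain y0 where y0H: "y0 \<in> HF F" and yy: "y = g y0" using yH gimg by blast
    have py0: "pnorm2 y0 < 1" using y0H by (simp add: HF_def)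
    have h1: "hdist y0 a1 < hdist y0 w0"
      using y1 gd[OF y0H a1H] gd[OF y0H w0H] by (simp add: halfspace_def yy za1 ww)
    have h2: "hdist y0 a2 < hdist y0 w0"
      using y2 gd[OF y0H a2H] gd[OF y0H w0H] by (simp add: halfspace_def yy za2 ww)
    obtain u v where uv: "u^2+v^2 < 1" and imp: "\<And>r s. r^2+s^2 < 1 \<Longrightarrow>
       hdist y0 (oreal r, oreal s) < hdist y0 (oreal r0, oreal s0) \<Longrightarrow>
       hdist (oreal u, oreal v) (oreal r, oreal s) < hdist (oreal u, oreal v) (oreal r0, oreal s0)"
      using real_case[OF py0 w0n] by blast
    define p where "p = (oreal u, oreal v)"
    have pR: "p \<in> HR_std F" using uv by (auto simp: HR_std_iff p_def)
    have pH: "p \<in> HF F" using pR HR_std_sub by auto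
    have q1: "hdist p a1 < hdist p w0" using imp[OF a1n] h1 by (simp add: p_def a1e w0e)
    have q2: "hdist p a2 < hdist p w0" using imp[OF a2n] h2 by (simp add: p_def a2e w0e)
    have gpP: "g p \<in> P" using pR Pg by blast
    have gpH: "g p \<in> HF F" using pH gimg by blast
    have "g p \<in> halfspace F z1 w"
      using q1 gd[OF pH a1H] gd[OF pH w0H] gpH by (simp add: halfspace_def za1 ww)
    moreover have "g p \<in> halfspace F z2 w"
      using q2 gd[OF pH a2H] gd[OF pH w0H] gpH by (simp add: halfspace_def za2 ww)
    ultimately show False using R gpP by blast
  qed
qed

end
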